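(* Let $C:2^M\to\mathbb{R}_{\ge0}$ be a monotone normalized cost function and $P_C$ its potential function. Then for every allocation $\vec S$, $P_C(\vec S)\le \mathcal H_n\cdot C(\vec S)$, where $\mathcal H_n=\sum_{k=1}^n \frac1k$.
   Context: Setting. $N=\{1,\dots,n\}$ is a set of players and $M_1,\dots,M_n$ are pairwise disjoint finite sets; $M=\bigcup_i M_i$. An allocation is a vector $\vec S=(S_1,\dots,S_n)$ with $S_i\subseteq M_i$, identified with the subset $\bigcup_i S_i$ of $M$. The potential function of a cost function $C$ is $P_C(\vec S)=\sum_{\emptyset\neq I\subseteq N}\frac{C(\bigcup_{i\in I}S_i)}{|I|\binom{n}{|I|}}$. *)

theory Defs
  imports Complex_Main
begin

definition ground :: "nat \<Rightarrow> (nat \<Rightarrow> 'a set) \<Rightarrow> 'a set" where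
  "ground n M = (\<Union>i\<in>{1..n}. M i)"

definition is_allocation :: "nat \<Rightarrow> (nat \<Rightarrow> 'a set) \<Rightarrow> (nat \<Rightarrow> 'a set) \<Rightarrow> bool" where
  "is_allocation n M S \<longleftrightarrow> (\<forall>i\<in>{1..n}. S i \<subseteq> M i)"

definition monotone_normalized_cost :: "'a set \<Rightarrow> ('a set \<Rightarrow> real) \<Rightarrow> bool" where
  "monotone_normalized_cost G C \<longleftrightarrow>
     C {} = 0 \<and> (\<forall>A. A \<subseteq> G \<longrightarrow> C A \<ge> 0) \<and>
     (\<forall>A B. A \<subseteq> B \<and> B \<subseteq> G \<longrightarrow> C A \<le> C B)"

definition potential :: "nat \<Rightarrow> ('a set \<Rightarrow> real) \<Rightarrow> (nat \<Rightarrow> 'a set) \<Rightarrow> real" where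
  "potential n C S = (\<Sum>I\<in>{I. I \<subseteq> {1..n} \<and> I \<noteq> {}}.
      C (\<Union>i\<in>I. S i) / (real (card I) * real (n choose card I)))"

definition harm :: "nat \<Rightarrow> real" where
  "harm n = (\<Sum>k=1..n. 1 / real k)"

end

theory Submission
  imports Defs
begin

lemma weights_sum:
  "(\<Sum>I\<in>{I. I \<subseteq> {1..n} \<and> I \<noteq> {}}. 1 / (real (card I) * real (n choose card I))) = harm n"
proof -
  let ?S = "{I. I \<subseteq> {1..n} \<and> I \<noteq> {}}"
  let ?h = "\<lambda>I. 1 / (real (card I) * real (n choose card I))"
  have fS: "finite ?S" by (rule finite_subset[of _ "Pow {1..n}"]) auto
  have img: "card ` ?S \<subseteq> {1..n}"
  proof
    fix k assume "k \<in> card ` ?S"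
    then obtain I where I: "I \<subseteq> {1..n}" "I \<noteq> {}" "k = card I" by auto
    have "finite I" using I(1) finite_subset by blast
    hence "card I \<ge> 1" using I(2) by (simp add: Suc_le_eq card_gt_0_iff)
    moreover have "card I \<le> n" using card_mono[OF _ I(1)] by simp
    ultimately show "k \<in> {1..n}" using I(3) by simp
  qed
  have "(\<Sum>I\<in>?S. ?h I) = (\<Sum>k\<in>{1..n}. \<Sum>I\<in>{I. I \<in> ?S \<and> card I = k}. ?h I)"
    using sum.group[OF fS _ img, of ?h] by simp
  also have "\<dots> = (\<Sum>k\<in>{1..n}. 1 / real k)"
  proof (rule sum.cong[OF refl])
    fix k assume k: "k \<in> {1..n}"
    have eq: "{I. I \<in> ?S \<and> card I = k} = {I. I \<subseteq> {1..n} \<and> card I = k}"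
      using k by auto
    have c: "card {I. I \<subseteq> {1..n} \<and> card I = k} = n choose k"
      using n_subsets[of "{1..n::nat}" k] by simp
    have pos: "(n choose k) > 0" using k by simp
    have "(\<Sum>I\<in>{I. I \<in> ?S \<and> card I = k}. ?h I)
        = (\<Sum>I\<in>{I. I \<subseteq> {1..n} \<and> card I = k}. 1 / (real k * real (n choose k)))"
      unfolding eq by (rule sum.cong) auto
    also have "\<dots> = real (n choose k) / (real k * real (n choose k))"
      using c by simp
    also have "\<dots> = 1 / real k" using pos by simp
    finally show "(\<Sum>I\<in>{I. I \<in> ?S \<and> card I = k}. ?h I) = 1 / real k" .
  qed
  finally show ?thesis unfolding harm_def .
qed

theorem claim3p4:
  fixes n :: nat and M :: "nat \<Rightarrow> 'a set" and C :: "'a set \<Rightarrow> real"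
    and S :: "nat \<Rightarrow> 'a set"
  assumes "\<forall>i\<in>{1..n}. finite (M i)"
    and "\<forall>i\<in>{1..n}. \<forall>j\<in>{1..n}. i \<noteq> j \<longrightarrow> M i \<inter> M j = {}"
    and "monotone_normalized_cost (ground n M) C"
    and "is_allocation n M S"
  shows "potential n C S \<le> harm n * C (\<Union>i\<in>{1..n}. S i)"
proof -
  let ?U = "\<Union>i\<in>{1..n}. S i"
  have UG: "?U \<subseteq> ground n M" using assms(4) unfolding is_allocation_def ground_def by blast
  have mono: "\<And>A B. A \<subseteq> B \<Longrightarrow> B \<subseteq> ground n M \<Longrightarrow> C A \<le> C B"
    using assms(3) unfolding monotone_normalized_cost_def by blast
  have "potential n C S \<le> (\<Sum>I\<in>{I. I \<subseteq> {1..n} \<and> I \<noteq> {}}.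
      C ?U * (1 / (real (card I) * real (n choose card I))))"
    unfolding potential_def
  proof (rule sum_mono)
    fix I assume I: "I \<in> {I. I \<subseteq> {1..n} \<and> I \<noteq> {}}"
    have "C (\<Union>i\<in>I. S i) \<le> C ?U" using I by (intro mono[OF _ UG]) blast
    moreover have "real (card I) * real (n choose card I) \<ge> 0" by simp
    ultimately show "C (\<Union>i\<in>I. S i) / (real (card I) * real (n choose card I))
        \<le> C ?U * (1 / (real (card I) * real (n choose card I)))"
      by (simp add: divide_right_mono)
  qed
  also have "\<dots> = C ?U * harm n" by (simp only: sum_distrib_left[symmetric] weights_sum)
  finally show ?thesis by (simp add: mult.commute)
qed

end
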